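(* Let $n=p'q$ where $p',q$ are distinct primes both at least $7$, let $A=L(n;p')$, and let $S=(x_1,x_2,x_3)$ be a sequence in $\mathbb{Z}_n$. Then $S$ is an $A$-extremal sequence for the Davenport constant if $S$ is equivalent with respect to $A$ to a sequence $(y_1,y_2,y_3)$ for which one of the following holds: (i) $y_1$ is the only term divisible by $q$, $y_1\neq 0$, and the image of $(y_2,y_3)$ under the natural map $g:\mathbb{Z}_n\to\mathbb{Z}_q$ is a $Q_q$-extremal sequence for the Davenport constant; (ii) $y_1$ is the only term coprime to $p'$, and the image of $(y_2,y_3)$ under $g$ is a $Q_q$-extremal sequence for the Davenport constant in $\mathbb{Z}_q$.
   Context: $\mathbb{Z}_m$ is the integers mod $m$, $U(m)$ its unit group; for a prime $q$, $Q_q=\{x^2: x\in U(q)\}$. For nonempty $A\subseteq\mathbb{Z}_m\setminus\{0\}$, a sequence $(x_1,\ldots,x_k)$ is an $A$-weighted zero-sum sequence if $\sum a_ix_i=0$ for some $a_i\in A$; $D_A(m)$ is the least $k$ such that every length-$k$ sequence in $\mathbb{Z}_m$ has a nonempty $A$-weighted zero-sum subsequence; an $A$-extremal sequence for the Davenport constant is a sequence of length $D_A(m)-1$ with no $A$-weighted zero-sum subsequence. For a multiplicative group $A$, $(x_1,\ldots,x_k)$ and $(y_1,\ldots,y_k)$ are equivalent with respect to $A$ if there are $a_i\in A$, a unit $c$ and a permutation $\sigma$ with $y_{\sigma(i)}=c\,a_ix_i$ for all $i$. For odd $m=\prod p_i^{r_i}$, prime $p\mid m$ and $a\in U(m)$,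 $\left(\frac{a}{p}\right)$ is the Legendre symbol of the image mod $p$, $\left(\frac{a}{m}\right)=\prod\left(\frac{a}{p_i}\right)^{r_i}$, and $L(m;p')=\{a\in U(m):\left(\frac{a}{m}\right)=\left(\frac{a}{p'}\right)\}$ for a prime $p'\mid m$. *)

theory Defs
  imports "HOL-Number_Theory.Number_Theory" "HOL-Combinatorics.Permutations"
begin

definition Zmod :: "int \<Rightarrow> int set" where
  "Zmod m = {0..<m}"

definition Umod :: "int \<Rightarrow> int set" where
  "Umod m = {a \<in> Zmod m. coprime a m}"

definition Qsq :: "int \<Rightarrow> int set" where
  "Qsq q = {(x ^ 2) mod q | x. x \<in> Umod q}"

definition has_wzs_subseq :: "int \<Rightarrow> int set \<Rightarrow> int list \<Rightarrow> bool" where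
  "has_wzs_subseq m A xs \<longleftrightarrow>
     (\<exists>I a. I \<subseteq> {..<length xs} \<and> I \<noteq> {} \<and> (\<forall>i\<in>I. a i \<in> A) \<and>
            (\<Sum>i\<in>I. a i * xs ! i) mod m = 0)"

definition Davenport :: "int \<Rightarrow> int set \<Rightarrow> nat" where
  "Davenport m A = (LEAST k. \<forall>xs. length xs = k \<and> set xs \<subseteq> Zmod m \<longrightarrow> has_wzs_subseq m A xs)"

definition extremal :: "int \<Rightarrow> int set \<Rightarrow> int list \<Rightarrow> bool" where
  "extremal m A xs \<longleftrightarrow> set xs \<subseteq> Zmod m \<and> length xs = Davenport m A - 1 \<and>
      \<not> has_wzs_subseq m A xs"

definition equiv_wrt :: "int \<Rightarrow> int set \<Rightarrow> int list \<Rightarrow> int list \<Rightarrow> bool" where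
  "equiv_wrt m A xs ys \<longleftrightarrow> length xs = length ys \<and>
     (\<exists>a c \<pi>. (\<forall>i<length xs. a i \<in> A) \<and> c \<in> Umod m \<and> (\<pi> permutes {..<length xs}) \<and>
        (\<forall>i<length xs. ys ! (\<pi> i) = (c * a i * xs ! i) mod m))"

definition Jac :: "int \<Rightarrow> int \<Rightarrow> int" where
  "Jac a m = (\<Prod>p\<in>prime_factors m. Legendre a p ^ multiplicity p m)"

definition Lset :: "int \<Rightarrow> int \<Rightarrow> int set" where
  "Lset m p' = {a \<in> Umod m. Jac a m = Legendre a p'}"

end

theory Submission
  imports Defs
begin

lemma L_mult:
  fixes q :: int assumes q: "prime q" "q > 2"
  shows "Legendre (a*b) q = Legendre a q * Legendre b q"
proof -
  define Q where "Q = nat q"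
  have qQ: "q = int Q" using q Q_def by simp
  have Q: "prime Q" "2 < Q" using q qQ by auto
  let ?k = "(Q - 1) div 2"
  have e1: "[Legendre (a*b) q = (a*b) ^ ?k] (mod q)" using euler_criterion[OF Q] qQ by simp
  have e2: "[Legendre a q * Legendre b q = a ^ ?k * b ^ ?k] (mod q)"
    using euler_criterion[OF Q, of a] euler_criterion[OF Q, of b] cong_mult qQ by simp
  have "[Legendre (a*b) q = Legendre a q * Legendre b q] (mod q)"
    using e1 e2 by (metis cong_sym cong_trans power_mult_distrib)
  then have d: "q dvd Legendre (a*b) q - Legendre a q * Legendre b q"
    by (simp add: cong_iff_dvd_diff)
  have r: "\<And>x. Legendre x q \<in> {-1,0,1}" by (simp add: Legendre_def)
  have "Legendre a q * Legendre b q \<in> {-1,0,1}" using r[of a] r[of b] by auto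
  then have "\<bar>Legendre (a*b) q - Legendre a q * Legendre b q\<bar> \<le> 2" using r[of "a*b"] by auto
  moreover have "Legendre (a*b) q - Legendre a q * Legendre b q = 0"
  proof (rule ccontr)
    assume "Legendre (a*b) q - Legendre a q * Legendre b q \<noteq> 0"
    then have "\<bar>q\<bar> \<le> \<bar>Legendre (a*b) q - Legendre a q * Legendre b q\<bar>"
      using d dvd_imp_le_int by blast
    then show False using calculation q by linarith
  qed
  then show ?thesis by simp
qed

lemma L_mod:
  fixes q :: int
  shows "Legendre (a mod q) q = Legendre a q"
  by (simp add: Legendre_def QuadRes_def cong_def)

lemma L_vals:
  fixes q :: int assumes "\<not> q dvd a"
  shows "Legendre a q = 1 \<or> Legendre a q = -1"
  using assms by (auto simp add: Legendre_def cong_0_iff)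

lemma L_one_iff:
  fixes q :: int assumes "\<not> q dvd a"
  shows "Legendre a q = 1 \<longleftrightarrow> QuadRes q a"
  using assms by (auto simp add: Legendre_def cong_0_iff)

lemma L_sq:
  fixes q :: int assumes "\<not> q dvd y"  "prime q"
  shows "Legendre (y^2) q = 1"
proof -
  have "\<not> q dvd y^2" using assms by (meson prime_dvd_power_int_iff zero_less_numeral)
  moreover have "QuadRes q (y^2)" unfolding QuadRes_def by (meson cong_refl)
  ultimately show ?thesis using L_one_iff[of q "y^2"] by blast
qed

lemma Qsq_char:
  fixes q :: int assumes q: "prime q"
  shows "a \<in> Qsq q \<longleftrightarrow> 0 \<le> a \<and> a < q \<and> \<not> q dvd a \<and> Legendre a q = 1"
proof
  assume "a \<in> Qsq q"
  then obtain x where x: "a = x^2 mod q" "x \<in> Umod q" by (auto simp: Qsq_def)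
  have "coprime x q" using x by (auto simp: Umod_def)
  then have nx: "\<not> q dvd x" using q
    by (meson coprime_common_divisor dvd_refl not_prime_unit)
  then have "\<not> q dvd x^2" using q by (meson prime_dvd_power_int_iff zero_less_numeral)
  then have "\<not> q dvd a" using x by (simp add: dvd_mod_iff)
  moreover have "Legendre a q = 1" using x L_mod L_sq[OF nx q] by simp
  moreover have "0 \<le> a \<and> a < q" using x q prime_gt_0_int by auto
  ultimately show "0 \<le> a \<and> a < q \<and> \<not> q dvd a \<and> Legendre a q = 1" by simp
next
  assume a: "0 \<le> a \<and> a < q \<and> \<not> q dvd a \<and> Legendre a q = 1"
  then obtain y where y: "[y^2 = a] (mod q)" using L_one_iff[of q a] by (auto simp: QuadRes_def)
  have "\<not> q dvd y"
  proof
    assume "q dvd y" then have "q dvd y^2" by (simp add: power2_eq_square)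
    then show False using y a by (metis cong_dvd_iff)
  qed
  then have "\<not> q dvd (y mod q)" by (simp add: dvd_mod_iff)
  then have "coprime q (y mod q)" by (rule prime_imp_coprime[OF q])
  then have "coprime (y mod q) q" by (rule coprime_commute[THEN iffD1])
  then have "y mod q \<in> Umod q" using q prime_gt_0_int by (auto simp: Umod_def Zmod_def)
  moreover have "(y mod q)^2 mod q = a" using y a by (simp add: cong_def power_mod)
  ultimately show "a \<in> Qsq q" unfolding Qsq_def by force
qed

lemma prime_ndvd_coprime:
  fixes p a :: int assumes "prime p" "\<not> p dvd a" shows "coprime a p"
  using prime_imp_coprime[OF assms] by (rule coprime_commute[THEN iffD1])

lemma coprime_ndvd:
  fixes p a :: int assumes "prime p" "coprime a p" shows "\<not> p dvd a"
  using assms by (meson coprime_common_divisor dvd_refl not_prime_unit)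

lemma Jac_pq:
  fixes p q a :: int assumes "prime p" "prime q" "p \<noteq> q"
  shows "Jac a (p*q) = Legendre a p * Legendre a q"
proof -
  have pf: "prime_factors (p*q) = {p,q}"
    using assms by (auto simp add: prime_factors_product prime_prime_factors prime_gt_0_int)
  have nz: "p \<noteq> 0" "q \<noteq> 0" using assms by auto
  have u: "\<not> is_unit p" "\<not> is_unit q" using assms not_prime_unit by blast+
  have m1: "multiplicity p (p*q) = 1"
  proof -
    have "multiplicity p (p*q) = multiplicity p p + multiplicity p q"
      using assms nz by (intro prime_elem_multiplicity_mult_distrib) auto
    then show ?thesis using multiplicity_self[OF nz(1) u(1)] assms prime_multiplicity_other[of p q] by simp
  qed
  have m2: "multiplicity q (p*q) = 1"
  proof -
    have "multiplicity q (p*q) = multiplicity q p + multiplicity q q"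
      using assms nz by (intro prime_elem_multiplicity_mult_distrib) auto
    then show ?thesis using multiplicity_self[OF nz(2) u(2)] assms prime_multiplicity_other[of q p] by simp
  qed
  show ?thesis unfolding Jac_def pf using assms m1 m2 by simp
qed

lemma Lset_char:
  fixes p q a :: int assumes "prime p" "prime q" "p \<noteq> q"
  shows "a \<in> Lset (p*q) p \<longleftrightarrow> 0 \<le> a \<and> a < p*q \<and> coprime a (p*q) \<and> Legendre a q = 1"
proof -
  have "coprime a (p*q) \<Longrightarrow> Legendre a p \<noteq> 0"
    using assms coprime_ndvd[OF assms(1), of a] by (auto simp: Legendre_def cong_0_iff)
  then show ?thesis using Jac_pq[OF assms, of a]
    by (auto simp: Lset_def Umod_def Zmod_def)
qed

lemma L_one:
  fixes q :: int assumes "prime q" shows "Legendre 1 q = 1"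
proof -
  have "\<not> q dvd 1" using assms not_prime_unit by blast
  then show ?thesis using L_sq[OF _ assms, of 1] by simp
qed

lemma A_mult:
  fixes p q a b :: int assumes pq: "prime p" "prime q" "p \<noteq> q" "q > 2"
    and "a \<in> Lset (p*q) p" "b \<in> Lset (p*q) p"
  shows "(a*b) mod (p*q) \<in> Lset (p*q) p"
proof -
  have pos: "p*q > 0" using pq prime_gt_0_int by simp
  have "coprime (a*b) (p*q)" using assms Lset_char[OF pq(1-3)] by simp
  then have "coprime ((a*b) mod (p*q)) (p*q)" using pos by (simp only: coprime_mod_left_iff)
  moreover have "Legendre ((a*b) mod (p*q)) q = 1"
  proof -
    have "Legendre ((a*b) mod (p*q)) q = Legendre (((a*b) mod (p*q)) mod q) q" using L_mod by simp
    also have "((a*b) mod (p*q)) mod q = (a*b) mod q" by (simp add: mod_mod_cancel)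
    also have "Legendre \<dots> q = Legendre (a*b) q" using L_mod by simp
    also have "\<dots> = 1" using L_mult[OF pq(2,4)] assms Lset_char[OF pq(1-3)] by simp
    finally show ?thesis .
  qed
  ultimately show ?thesis using Lset_char[OF pq(1-3)] pos by simp
qed

lemma A_inv:
  fixes p q a :: int assumes pq: "prime p" "prime q" "p \<noteq> q" "q > 2"
    and "a \<in> Lset (p*q) p"
  shows "\<exists>b\<in>Lset (p*q) p. [a*b = 1] (mod (p*q))"
proof -
  have pos: "p*q > 0" using pq prime_gt_0_int by simp
  have ca: "coprime a (p*q)" and La: "Legendre a q = 1" using assms Lset_char[OF pq(1-3)] by auto
  obtain x where x: "[a*x = 1] (mod (p*q))" using cong_solve_coprime_int[OF ca] by blast
  define b where "b = x mod (p*q)"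
  have xb: "[a*b = 1] (mod (p*q))" using x unfolding b_def by (simp add: cong_def mod_mult_right_eq)
  have "[b*a = 1] (mod (p*q))" using xb by (simp add: mult.commute)
  then have cb: "coprime b (p*q)" unfolding coprime_iff_invertible_int by blast
  have "[a*b = 1] (mod q)" using xb by (rule cong_dvd_modulus) simp
  then have "(a*b) mod q = 1 mod q" by (simp add: cong_def)
  then have "Legendre ((a*b) mod q) q = Legendre (1 mod q) q" by (simp only:)
  then have "Legendre (a*b) q = Legendre 1 q" by (simp only: L_mod)
  then have "Legendre a q * Legendre b q = 1" using L_mult[OF pq(2,4)] L_one[OF pq(2)] by simp
  then have "Legendre b q = 1" using La by simp
  moreover have "0 \<le> b" "b < p*q" using pos b_def by auto
  ultimately have "b \<in> Lset (p*q) p" using cb Lset_char[OF pq(1-3)] by simp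
  then show ?thesis using xb by blast
qed

lemma wzs_transfer:
  fixes m :: int
  assumes w: "has_wzs_subseq m A xs" and e: "equiv_wrt m A xs ys" and m: "m > 0"
    and cl: "\<And>a b. a \<in> A \<Longrightarrow> b \<in> A \<Longrightarrow> (a*b) mod m \<in> A"
    and iv: "\<And>a. a \<in> A \<Longrightarrow> \<exists>b\<in>A. [a*b = 1] (mod m)"
  shows "has_wzs_subseq m A ys"
proof -
  obtain I w where I: "I \<subseteq> {..<length xs}" "I \<noteq> {}" "\<forall>i\<in>I. w i \<in> A"
    "(\<Sum>i\<in>I. w i * xs ! i) mod m = 0" by (rule exE[OF w[unfolded has_wzs_subseq_def]], elim exE conjE, rule that, assumption+)
  have len: "length xs = length ys" using conjunct1[OF e[unfolded equiv_wrt_def]] .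
  note e2 = conjunct2[OF e[unfolded equiv_wrt_def]]
  obtain a c \<pi> where a: "\<forall>i<length xs. a i \<in> A"
    and c: "c \<in> Umod m" and pi: "\<pi> permutes {..<length xs}"
    and y: "\<forall>i<length xs. ys ! (\<pi> i) = (c * a i * xs ! i) mod m"
    by (rule exE[OF e2], elim exE conjE, rule that, assumption+)
  define b where "b i = (SOME b. b \<in> A \<and> [a i * b = 1] (mod m))" for i
  have b: "b i \<in> A \<and> [a i * b i = 1] (mod m)" if "i < length xs" for i
    unfolding b_def by (rule someI_ex) (use iv[of "a i"] a that in blast)
  define w' where "w' j = (w (inv_into UNIV \<pi> j) * b (inv_into UNIV \<pi> j)) mod m" for j
  have inj: "inj_on \<pi> I" using pi permutes_inj inj_on_subset by blast
  have invpi: "inv_into UNIV \<pi> (\<pi> i) = i" for i using pi permutes_inverses(2) by fastforce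
  have "\<pi> ` I \<subseteq> \<pi> ` {..<length xs}" using I(1) by (rule image_mono)
  then have "\<pi> ` I \<subseteq> {..<length ys}" using permutes_image[OF pi] len by simp
  moreover have "\<pi> ` I \<noteq> {}" using I(2) by simp
  moreover have "\<forall>j\<in>\<pi> ` I. w' j \<in> A"
    using I(1,3) b cl unfolding w'_def by (auto simp: invpi)
  moreover have "(\<Sum>j\<in>\<pi> ` I. w' j * ys ! j) mod m = 0"
  proof -
    have "(\<Sum>j\<in>\<pi> ` I. w' j * ys ! j) = (\<Sum>i\<in>I. w' (\<pi> i) * ys ! (\<pi> i))"
      by (simp add: sum.reindex[OF inj])
    also have "\<dots> = (\<Sum>i\<in>I. ((w i * b i) mod m) * ((c * a i * xs ! i) mod m))"
      using I(1) y by (intro sum.cong) (auto simp: w'_def invpi)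
    finally have eq: "(\<Sum>j\<in>\<pi> ` I. w' j * ys ! j) = \<dots>" .
    have t: "[((w i * b i) mod m) * ((c * a i * xs ! i) mod m) = c * (w i * xs ! i)] (mod m)"
      if "i \<in> I" for i
    proof -
      have 1: "[((w i * b i) mod m) * ((c * a i * xs ! i) mod m) = (a i * b i) * (c * (w i * xs ! i))] (mod m)"
      proof -
        have "[((w i * b i) mod m) * ((c * a i * xs ! i) mod m) = (w i * b i) * (c * a i * xs ! i)] (mod m)"
          unfolding cong_def by (rule mod_mult_eq)
        moreover have "(w i * b i) * (c * a i * xs ! i) = (a i * b i) * (c * (w i * xs ! i))"
          by (simp only: ac_simps)
        ultimately show ?thesis by simp
      qed
      have "[(a i * b i) * (c * (w i * xs ! i)) = 1 * (c * (w i * xs ! i))] (mod m)"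
        using b[of i] that I(1) by (intro cong_mult cong_refl) auto
      then show ?thesis using 1 cong_trans by simp
    qed
    have "[(\<Sum>i\<in>I. ((w i * b i) mod m) * ((c * a i * xs ! i) mod m)) = (\<Sum>i\<in>I. c * (w i * xs ! i))] (mod m)"
      using t by (rule cong_sum)
    moreover have "(\<Sum>i\<in>I. c * (w i * xs ! i)) = c * (\<Sum>i\<in>I. w i * xs ! i)"
      by (simp add: sum_distrib_left)
    moreover have "[c * (\<Sum>i\<in>I. w i * xs ! i) = c * 0] (mod m)"
      using I(4) by (intro cong_mult cong_refl) (simp add: cong_def)
    ultimately have "[(\<Sum>i\<in>I. ((w i * b i) mod m) * ((c * a i * xs ! i) mod m)) = c * 0] (mod m)"
      by (metis (no_types) cong_trans)
    then have "[(\<Sum>j\<in>\<pi> ` I. w' j * ys ! j) = 0] (mod m)" using eq by simp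
    then show ?thesis by (simp add: cong_def)
  qed
  ultimately show ?thesis unfolding has_wzs_subseq_def by (intro exI[of _ "\<pi> ` I"] exI[of _ w']) blast
qed

lemma sum3:
  assumes "I \<subseteq> {..<3::nat}"
  shows "sum f I = (if 0 \<in> I then f 0 else 0) + (if 1 \<in> I then f 1 else 0) + (if 2 \<in> I then f 2 else 0)"
proof -
  have "sum f I = sum f ({..<3} \<inter> I)" using assms by (simp add: Int_absorb1)
  also have "\<dots> = (\<Sum>i<3. if i \<in> I then f i else 0)" by (rule sum.inter_restrict) simp
  also have "\<dots> = (if 0 \<in> I then f 0 else 0) + (if 1 \<in> I then f 1 else 0) + (if 2 \<in> I then f 2 else 0)"
    by (simp add: eval_nat_numeral)
  finally show ?thesis .
qed

lemma sum2:
  assumes "I \<subseteq> {..<2::nat}"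
  shows "sum f I = (if 0 \<in> I then f 0 else 0) + (if 1 \<in> I then f 1 else 0)"
proof -
  have "sum f I = sum f ({..<2} \<inter> I)" using assms by (simp add: Int_absorb1)
  also have "\<dots> = (\<Sum>i<2. if i \<in> I then f i else 0)" by (rule sum.inter_restrict) simp
  also have "\<dots> = (if 0 \<in> I then f 0 else 0) + (if 1 \<in> I then f 1 else 0)"
    by (simp add: eval_nat_numeral)
  finally show ?thesis .
qed

lemma A_props:
  fixes p q a :: int assumes pq: "prime p" "prime q" "p \<noteq> q" and a: "a \<in> Lset (p*q) p"
  shows "\<not> p dvd a" "\<not> q dvd a" "a mod q \<in> Qsq q" "coprime a (p*q)"
proof -
  have c: "coprime a (p*q)" and L: "Legendre a q = 1" using a Lset_char[OF pq] by auto
  then show "\<not> p dvd a" "\<not> q dvd a" using coprime_ndvd pq by auto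
  then show "a mod q \<in> Qsq q" using Qsq_char[OF pq(2)] L L_mod[of a q] pq prime_gt_0_int[OF pq(2)]
    by (simp add: dvd_mod_iff)
  show "coprime a (p*q)" by (rule c)
qed

lemma mm2: "((a mod q)*(b mod q) + (c mod q)*(d mod q)) mod q = (a*b + c*d) mod (q::int)"
  by (metis mod_add_eq mod_mult_eq)

lemma qpart:
  fixes p q y1 y2 y3 :: int
  assumes pq: "prime p" "prime q" "p \<noteq> q"
    and I: "I \<subseteq> {..<3}" and w: "\<forall>i\<in>I. w i \<in> Lset (p*q) p"
    and S: "(\<Sum>i\<in>I. w i * [y1,y2,y3] ! i) mod q = 0"
    and z: "0 \<in> I \<longrightarrow> q dvd y1" and ne: "1 \<in> I \<or> 2 \<in> I"
  shows "has_wzs_subseq q (Qsq q) [y2 mod q, y3 mod q]"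
proof -
  define J where "J = {j. j < 2 \<and> Suc j \<in> I}"
  define w2 where "w2 j = w (Suc j) mod q" for j
  have j0: "0 \<in> J \<longleftrightarrow> 1 \<in> I" and j1: "1 \<in> J \<longleftrightarrow> 2 \<in> I" by (auto simp: J_def numeral_2_eq_2)
  have Jsub2: "J \<subseteq> {..<2}" by (auto simp: J_def)
  have Jsub: "J \<subseteq> {..<length [y2 mod q, y3 mod q]}" by (auto simp: J_def)
  have "0 \<in> J \<or> 1 \<in> J" using ne j0 j1 by blast
  then have J: "J \<subseteq> {..<length [y2 mod q, y3 mod q]}" "J \<noteq> {}"
    using Jsub by blast+
  have Jw: "\<forall>j\<in>J. w2 j \<in> Qsq q" using w A_props[OF pq] unfolding J_def w2_def by auto
  have e1: "(\<Sum>j\<in>J. w2 j * [y2 mod q, y3 mod q] ! j) =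
     (if 1 \<in> I then (w 1 mod q) * (y2 mod q) else 0) + (if 2 \<in> I then (w 2 mod q) * (y3 mod q) else 0)"
    unfolding sum2[OF Jsub2] j0 j1 by (simp add: w2_def numeral_2_eq_2)
  have e2: "(\<Sum>i\<in>I. w i * [y1,y2,y3] ! i) =
     (if 0 \<in> I then w 0 * y1 else 0) + (if 1 \<in> I then w 1 * y2 else 0) + (if 2 \<in> I then w 2 * y3 else 0)"
    unfolding sum3[OF I] by simp
  have d0: "q dvd (if 0 \<in> I then w 0 * y1 else 0)" using z by auto
  have "((if 1 \<in> I then w 1 * y2 else 0) + (if 2 \<in> I then w 2 * y3 else 0)) mod q = 0"
  proof -
    have "q dvd (if 0 \<in> I then w 0 * y1 else 0) + ((if 1 \<in> I then w 1 * y2 else 0) + (if 2 \<in> I then w 2 * y3 else 0))"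
      using S e2 by (simp add: add.assoc mod_eq_0_iff_dvd)
    then show ?thesis using d0 by (simp add: dvd_add_right_iff mod_eq_0_iff_dvd)
  qed
  moreover have "((if 1 \<in> I then (w 1 mod q) * (y2 mod q) else 0) + (if 2 \<in> I then (w 2 mod q) * (y3 mod q) else 0)) mod q
      = ((if 1 \<in> I then w 1 * y2 else 0) + (if 2 \<in> I then w 2 * y3 else 0)) mod q"
    by (cases "1 \<in> I"; cases "2 \<in> I") (simp_all only: if_True if_False mm2 mod_mult_eq add_0 add_0_right)
  ultimately have S2: "(\<Sum>j\<in>J. w2 j * [y2 mod q, y3 mod q] ! j) mod q = 0" using e1 by simp
  show ?thesis unfolding has_wzs_subseq_def
    by (rule exI[of _ J], rule exI[of _ w2], intro conjI, fact J(1), fact J(2), fact Jw, fact S2)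
qed

lemma nowzs_y:
  fixes p q y1 y2 y3 :: int
  assumes pq: "prime p" "prime q" "p \<noteq> q"
    and y1: "0 \<le> y1" "y1 < p*q"
    and c: "(q dvd y1 \<and> y1 \<noteq> 0) \<or> (coprime y1 p \<and> \<not> coprime y2 p \<and> \<not> coprime y3 p)"
    and nq: "\<not> has_wzs_subseq q (Qsq q) [y2 mod q, y3 mod q]"
  shows "\<not> has_wzs_subseq (p*q) (Lset (p*q) p) [y1,y2,y3]"
proof
  assume "has_wzs_subseq (p*q) (Lset (p*q) p) [y1,y2,y3]"
  obtain I w where I: "I \<subseteq> {..<3}" "I \<noteq> {}" and w: "\<forall>i\<in>I. w i \<in> Lset (p*q) p"
    and S: "(\<Sum>i\<in>I. w i * [y1,y2,y3] ! i) mod (p*q) = 0"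
    by (rule exE[OF \<open>has_wzs_subseq (p*q) (Lset (p*q) p) [y1,y2,y3]\<close>[unfolded has_wzs_subseq_def]],
        elim exE conjE, rule that, simp_all add: numeral_3_eq_3)
  have Sq: "(\<Sum>i\<in>I. w i * [y1,y2,y3] ! i) mod q = 0" using S
    by (metis dvd_triv_right mod_mod_cancel mod_0)
  have Sp: "(\<Sum>i\<in>I. w i * [y1,y2,y3] ! i) mod p = 0" using S
    by (metis dvd_triv_left mod_mod_cancel mod_0)
  have e2: "(\<Sum>i\<in>I. w i * [y1,y2,y3] ! i) =
     (if 0 \<in> I then w 0 * y1 else 0) + (if 1 \<in> I then w 1 * y2 else 0) + (if 2 \<in> I then w 2 * y3 else 0)"
    unfolding sum3[OF I(1)] by simp
  show False
  proof (cases "1 \<in> I \<or> 2 \<in> I")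
    case True
    show False
    proof (cases "0 \<in> I \<longrightarrow> q dvd y1")
      case True
      then show False using qpart[OF pq I(1) w Sq] \<open>1 \<in> I \<or> 2 \<in> I\<close> nq by blast
    next
      case False
      then have "0 \<in> I" "\<not> q dvd y1" by auto
      then have cp: "coprime y1 p" "p dvd y2" "p dvd y3" using c pq prime_ndvd_coprime coprime_commute
        by (metis coprime_commute)+
      have "p dvd (if 0 \<in> I then w 0 * y1 else 0) + ((if 1 \<in> I then w 1 * y2 else 0) + (if 2 \<in> I then w 2 * y3 else 0))"
        using Sp e2 by (simp add: add.assoc mod_eq_0_iff_dvd)
      moreover have "p dvd ((if 1 \<in> I then w 1 * y2 else 0) + (if 2 \<in> I then w 2 * y3 else 0))"
        using cp by auto
      ultimately have "p dvd w 0 * y1" using \<open>0 \<in> I\<close> by (simp add: dvd_add_left_iff)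
      moreover have "\<not> p dvd w 0" using A_props[OF pq] w \<open>0 \<in> I\<close> by blast
      moreover have "\<not> p dvd y1" using cp(1) coprime_ndvd pq(1) by blast
      ultimately show False using pq(1) prime_dvd_mult_iff by blast
    qed
  next
    case False
    have "I \<subseteq> {0,1,2}" using I(1) by (auto simp: eval_nat_numeral less_Suc_eq)
    then have I0: "I = {0}" using I(2) False by auto
    then have "(w 0 * y1) mod (p*q) = 0" using S by simp
    then have "p*q dvd w 0 * y1" by (simp add: mod_eq_0_iff_dvd)
    moreover have "coprime (w 0) (p*q)" using A_props[OF pq] w I0 by blast
    ultimately have "p*q dvd y1" by (metis coprime_commute coprime_dvd_mult_right_iff)
    then have y10: "y1 = 0" using y1 by (metis zdvd_not_zless le_less)
    show False
    proof (cases "q dvd y1 \<and> y1 \<noteq> 0")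
      case True then show False using y10 by simp
    next
      case False
      then have "coprime y1 p" using c by blast
      then show False using y10 pq(1) by (simp add: not_prime_unit)
    qed
  qed
qed

lemma exists_P:
  fixes q :: int assumes q: "prime q"
  shows "\<exists>k. \<forall>xs. length xs = k \<and> set xs \<subseteq> Zmod q \<longrightarrow> has_wzs_subseq q (Qsq q) xs"
proof (intro exI allI impI)
  fix xs :: "int list" assume xs: "length xs = nat q \<and> set xs \<subseteq> Zmod q"
  define k where "k = nat q"
  have qk: "q = int k" using q k_def prime_gt_0_int[OF q] by simp
  define s where "s j = (\<Sum>i<j. xs ! i) mod q" for j
  have "s ` {0..k} \<subseteq> {0..<q}" using q prime_gt_0_int[OF q] unfolding s_def by auto
  moreover have "card {0..<q} = k" using qk by simp
  moreover have "card {0..k} = Suc k" by simp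
  ultimately have "\<not> inj_on s {0..k}"
    by (metis card_inj_on_le finite_atLeastLessThan_int lessI not_le)
  then obtain j1 j2 where j: "j1 \<in> {0..k}" "j2 \<in> {0..k}" "j1 \<noteq> j2" "s j1 = s j2"
    unfolding inj_on_def by blast
  obtain a b where ab: "a < b" "b \<le> k" "s a = s b"
    using j by (metis atLeastAtMost_iff linorder_neqE_nat)
  have one: "1 \<in> Qsq q"
    using Qsq_char[OF q] q L_one[OF q] prime_gt_1_int[OF q] by (simp add: not_prime_unit)
  have "(\<Sum>i<b. xs ! i) = (\<Sum>i<a. xs ! i) + (\<Sum>i\<in>{a..<b}. xs ! i)"
    using ab by (metis lessThan_atLeast0 le0 less_imp_le sum.atLeastLessThan_concat)
  then have "(\<Sum>i\<in>{a..<b}. xs ! i) mod q = 0"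
    using ab(3) unfolding s_def by (metis add_diff_cancel_left' mod_0 mod_diff_cong diff_self)
  then have "(\<Sum>i\<in>{a..<b}. 1 * xs ! i) mod q = 0" by simp
  moreover have "{a..<b} \<subseteq> {..<length xs}" using ab xs k_def by auto
  moreover have "{a..<b} \<noteq> {}" using ab by simp
  ultimately show "has_wzs_subseq q (Qsq q) xs" unfolding has_wzs_subseq_def using one
    by (intro exI[of _ "{a..<b}"] exI[of _ "\<lambda>_. 1"]) auto
qed

lemma lift:
  fixes p q :: int and zs :: "int list" and \<alpha> :: "nat \<Rightarrow> int"
  assumes pq: "prime p" "prime q" "p \<noteq> q" "p > 2"
    and \<alpha>: "\<forall>t<length zs. \<alpha> t = 0 \<or> \<alpha> t \<in> Qsq q"
    and nz: "\<exists>t<length zs. \<alpha> t \<noteq> 0"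
    and S: "(\<Sum>t<length zs. \<alpha> t * zs!t) mod q = 0"
    and cnt: "card {t. t < length zs \<and> \<alpha> t \<noteq> 0 \<and> \<not> p dvd zs!t} \<noteq> 1"
  shows "has_wzs_subseq (p*q) (Lset (p*q) p) zs"
proof -
  define I where "I = {t. t < length zs \<and> \<alpha> t \<noteq> 0}"
  define K where "K = {t. t < length zs \<and> \<alpha> t \<noteq> 0 \<and> \<not> p dvd zs!t}"
  have finI: "finite I" by (simp add: I_def)
  have KI: "K \<subseteq> I" by (auto simp: I_def K_def)
  have Iq: "\<forall>t\<in>I. \<alpha> t \<in> Qsq q" using \<alpha> by (auto simp: I_def)
  have Ine: "I \<noteq> {}" using nz by (auto simp: I_def)
  have Ilen: "I \<subseteq> {..<length zs}" by (auto simp: I_def)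
  have np1: "\<not> p dvd 1" using pq(1) not_prime_unit by blast
  have "\<exists>\<beta>. (\<forall>t\<in>I. \<not> p dvd \<beta> t) \<and> p dvd (\<Sum>t\<in>I. \<beta> t * zs!t)"
  proof (cases "K = {}")
    case True
    then have "\<forall>t\<in>I. p dvd zs!t" by (auto simp: I_def K_def)
    then have "p dvd (\<Sum>t\<in>I. 1 * zs!t)" by (auto intro!: dvd_sum)
    then show ?thesis using np1 by (intro exI[of _ "\<lambda>_. 1"]) auto
  next
    case False
    then obtain i0 where i0: "i0 \<in> K" by blast
    have "K \<noteq> {i0}" using cnt unfolding K_def[symmetric] by auto
    then obtain i1 where i1: "i1 \<in> K" "i1 \<noteq> i0" using i0 by blast
    define R where "R = (\<Sum>t\<in>I - {i0} - {i1}. zs!t)"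
    define z0 where "z0 = zs!i0"
    define z1 where "z1 = zs!i1"
    have nz0: "\<not> p dvd z0" "\<not> p dvd z1" using i0 i1 by (auto simp: K_def z0_def z1_def)
    obtain \<tau> where \<tau>: "\<tau> = 1 \<or> \<tau> = 2" "\<not> p dvd R + \<tau> * z1"
    proof (cases "p dvd R + 1*z1")
      case True
      have "\<not> p dvd R + 2*z1"
      proof
        assume "p dvd R + 2*z1"
        then have "p dvd (R + 2*z1) - (R + 1*z1)" using True by (intro dvd_diff)
        then show False using nz0 by simp
      qed
      then show ?thesis using that[of 2] by simp
    next
      case False
      then show ?thesis using that[of 1] by simp
    qed
    obtain s where s: "[z0 * s = 1] (mod p)"
      using cong_solve_coprime_int prime_ndvd_coprime[OF pq(1) nz0(1)] by blast
    define X where "X = R + \<tau>*z1"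
    define \<beta> where "\<beta> t = (if t = i0 then -X*s else if t = i1 then \<tau> else 1)" for t
    have c0: "[(-X*s)*z0 = -X] (mod p)"
    proof -
      have "[(-X)*(z0*s) = (-X)*1] (mod p)" using s by (intro cong_mult cong_refl)
      then show ?thesis by (simp add: ac_simps)
    qed
    have b0: "\<not> p dvd -X*s"
    proof
      assume "p dvd -X*s"
      then have "p dvd (-X*s)*z0" by simp
      then have "p dvd -X" using c0 cong_dvd_iff by blast
      then have "p dvd X" by (simp only: dvd_minus_iff)
      then show False using \<tau>(2) X_def by simp
    qed
    have b1: "\<not> p dvd \<tau>"
    proof
      assume pt: "p dvd \<tau>"
      show False
      proof (cases "\<tau> = 1")
        case True then show False using pt np1 by simp
      next
        case False
        then have "\<tau> = 2" using \<tau>(1) by simp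
        then have "p \<le> 2" using pt zdvd_imp_le[of p 2] by simp
        then show False using pq(4) by simp
      qed
    qed
    have "\<forall>t\<in>I. \<not> p dvd \<beta> t" using b0 b1 np1 by (auto simp: \<beta>_def)
    moreover have "p dvd (\<Sum>t\<in>I. \<beta> t * zs!t)"
    proof -
      have i0I: "i0 \<in> I" "i1 \<in> I" using KI i0 i1 by auto
      have "(\<Sum>t\<in>I. \<beta> t * zs!t) = \<beta> i0 * zs!i0 + (\<Sum>t\<in>I-{i0}. \<beta> t * zs!t)"
        using finI i0I by (simp add: sum.remove)
      also have "(\<Sum>t\<in>I-{i0}. \<beta> t * zs!t) = \<beta> i1 * zs!i1 + (\<Sum>t\<in>I-{i0}-{i1}. \<beta> t * zs!t)"
        using finI i0I i1 by (intro sum.remove) auto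
      also have "(\<Sum>t\<in>I-{i0}-{i1}. \<beta> t * zs!t) = R"
        unfolding R_def by (intro sum.cong) (auto simp: \<beta>_def)
      finally have "(\<Sum>t\<in>I. \<beta> t * zs!t) = (-X*s)*z0 + (\<tau>*z1 + R)"
        using i1 by (simp add: \<beta>_def z0_def z1_def)
      moreover have "[(-X*s)*z0 + (\<tau>*z1 + R) = -X + (\<tau>*z1 + R)] (mod p)"
        using c0 by (intro cong_add cong_refl)
      moreover have "-X + (\<tau>*z1 + R) = 0" by (simp add: X_def)
      ultimately show ?thesis by (simp add: cong_0_iff)
    qed
    ultimately show ?thesis by blast
  qed
  then obtain \<beta> where \<beta>: "\<forall>t\<in>I. \<not> p dvd \<beta> t" "p dvd (\<Sum>t\<in>I. \<beta> t * zs!t)" by blast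
  have cpq: "coprime p q" using pq primes_coprime by blast
  have "\<forall>t. \<exists>x. [x = \<beta> t] (mod p) \<and> [x = \<alpha> t] (mod q)"
    using binary_chinese_remainder_int[OF cpq] by blast
  from choice[OF this] obtain c where c: "\<And>t. [c t = \<beta> t] (mod p) \<and> [c t = \<alpha> t] (mod q)" by blast
  define a where "a t = c t mod (p*q)" for t
  have pos: "p*q > 0" using pq prime_gt_0_int by simp
  have amod: "[a t = c t] (mod (p*q))" for t unfolding a_def by (simp add: cong_def)
  have ap: "[a t = \<beta> t] (mod p)" for t
  proof -
    have "[a t = c t] (mod p)" by (rule cong_dvd_modulus[OF amod]) simp
    then show ?thesis using c[of t] cong_trans by blast
  qed
  have aq: "[a t = \<alpha> t] (mod q)" for t
  proof -
    have "[a t = c t] (mod q)" by (rule cong_dvd_modulus[OF amod]) simp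
    then show ?thesis using c[of t] cong_trans by blast
  qed
  have aA: "a t \<in> Lset (p*q) p" if t: "t \<in> I" for t
  proof -
    have "\<not> p dvd a t" using ap[of t] \<beta>(1) t cong_dvd_iff by blast
    moreover have "\<not> q dvd \<alpha> t" using Iq t Qsq_char[OF pq(2)] by blast
    then have "\<not> q dvd a t" using aq[of t] cong_dvd_iff by blast
    ultimately have "coprime (a t) (p*q)" using prime_ndvd_coprime pq by simp
    moreover have "Legendre (a t) q = 1"
    proof -
      have "Legendre (a t) q = Legendre (a t mod q) q" by (simp add: L_mod)
      also have "a t mod q = \<alpha> t mod q" using aq[of t] by (simp add: cong_def)
      also have "Legendre (\<alpha> t mod q) q = Legendre (\<alpha> t) q" by (simp add: L_mod)
      also have "\<dots> = 1" using Iq t Qsq_char[OF pq(2)] by blast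
      finally show ?thesis .
    qed
    moreover have "0 \<le> a t" "a t < p*q" using pos by (auto simp: a_def)
    ultimately show ?thesis using Lset_char[OF pq(1-3)] by simp
  qed
  have "p dvd (\<Sum>t\<in>I. a t * zs!t)"
  proof -
    have "[(\<Sum>t\<in>I. a t * zs!t) = (\<Sum>t\<in>I. \<beta> t * zs!t)] (mod p)"
      by (intro cong_sum cong_mult ap cong_refl)
    then show ?thesis using \<beta>(2) cong_dvd_iff by blast
  qed
  moreover have "q dvd (\<Sum>t\<in>I. a t * zs!t)"
  proof -
    have "[(\<Sum>t\<in>I. a t * zs!t) = (\<Sum>t\<in>I. \<alpha> t * zs!t)] (mod q)"
      by (intro cong_sum cong_mult aq cong_refl)
    moreover have "(\<Sum>t\<in>I. \<alpha> t * zs!t) = (\<Sum>t<length zs. \<alpha> t * zs!t)"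
      by (intro sum.mono_neutral_left) (auto simp: I_def)
    ultimately have cq: "[(\<Sum>t\<in>I. a t * zs!t) = (\<Sum>t<length zs. \<alpha> t * zs!t)] (mod q)" by simp
    have "q dvd (\<Sum>t<length zs. \<alpha> t * zs!t)" using S by (simp add: mod_eq_0_iff_dvd)
    then show ?thesis using cong_dvd_iff[OF cq] by simp
  qed
  ultimately have "p*q dvd (\<Sum>t\<in>I. a t * zs!t)" using cpq by (rule divides_mult)
  then have Sa: "(\<Sum>t\<in>I. a t * zs!t) mod (p*q) = 0" by simp
  have aA': "\<forall>t\<in>I. a t \<in> Lset (p*q) p" using aA by blast
  show ?thesis unfolding has_wzs_subseq_def
    by (rule exI[of _ I], rule exI[of _ a], intro conjI, fact Ilen, fact Ine, fact aA', fact Sa)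
qed

definition W :: "int \<Rightarrow> int \<Rightarrow> bool" where "W q r \<longleftrightarrow> r = 0 \<or> r \<in> Qsq q"
definition ct :: "int \<Rightarrow> int \<Rightarrow> int \<Rightarrow> nat" where
  "ct p r z = (if r \<noteq> 0 \<and> \<not> p dvd z then 1 else 0)"
definition Found :: "int \<Rightarrow> int \<Rightarrow> int \<Rightarrow> int \<Rightarrow> int \<Rightarrow> int \<Rightarrow> bool" where
  "Found p q z1 z2 z3 z4 \<longleftrightarrow> (\<exists>r1 r2 r3 r4. W q r1 \<and> W q r2 \<and> W q r3 \<and> W q r4 \<and>
     (r1 \<noteq> 0 \<or> r2 \<noteq> 0 \<or> r3 \<noteq> 0 \<or> r4 \<noteq> 0) \<and> (r1*z1 + r2*z2 + r3*z3 + r4*z4) mod q = 0 \<and>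
     ct p r1 z1 + ct p r2 z2 + ct p r3 z3 + ct p r4 z4 \<noteq> 1)"

lemma FoundI:
  assumes "W q r1" "W q r2" "W q r3" "W q r4" "r1 \<noteq> 0 \<or> r2 \<noteq> 0 \<or> r3 \<noteq> 0 \<or> r4 \<noteq> 0"
    "(r1*z1 + r2*z2 + r3*z3 + r4*z4) mod q = 0"
    "ct p r1 z1 + ct p r2 z2 + ct p r3 z3 + ct p r4 z4 \<noteq> 1"
  shows "Found p q z1 z2 z3 z4"
  unfolding Found_def
  by (rule exI[of _ r1], rule exI[of _ r2], rule exI[of _ r3], rule exI[of _ r4], intro conjI, fact+)

lemma FoundE:
  assumes "Found p q z1 z2 z3 z4"
  obtains r1 r2 r3 r4 where "W q r1" "W q r2" "W q r3" "W q r4" "r1 \<noteq> 0 \<or> r2 \<noteq> 0 \<or> r3 \<noteq> 0 \<or> r4 \<noteq> 0"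
    "(r1*z1 + r2*z2 + r3*z3 + r4*z4) mod q = 0"
    "ct p r1 z1 + ct p r2 z2 + ct p r3 z3 + ct p r4 z4 \<noteq> 1"
  by (rule exE[OF assms[unfolded Found_def]], elim exE conjE, rule that, assumption+)

lemma sw12: assumes "Found p q a b c d" shows "Found p q b a c d"
proof -
  obtain r1 r2 r3 r4 where h: "W q r1" "W q r2" "W q r3" "W q r4" "r1 \<noteq> 0 \<or> r2 \<noteq> 0 \<or> r3 \<noteq> 0 \<or> r4 \<noteq> 0"
    "(r1*a + r2*b + r3*c + r4*d) mod q = 0" "ct p r1 a + ct p r2 b + ct p r3 c + ct p r4 d \<noteq> 1"
    using FoundE[OF assms] by blast
  have e: "r2*b + r1*a + r3*c + r4*d = r1*a + r2*b + r3*c + r4*d" by linarith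
  have s: "(r2*b + r1*a + r3*c + r4*d) mod q = 0" by (subst e) (rule h(6))
  have c: "ct p r2 b + ct p r1 a + ct p r3 c + ct p r4 d \<noteq> 1" using h(7) by (simp add: ac_simps)
  show ?thesis by (rule FoundI[of q r2 r1 r3 r4]) (use h s c in blast)+
qed

lemma sw23: assumes "Found p q a b c d" shows "Found p q a c b d"
proof -
  obtain r1 r2 r3 r4 where h: "W q r1" "W q r2" "W q r3" "W q r4" "r1 \<noteq> 0 \<or> r2 \<noteq> 0 \<or> r3 \<noteq> 0 \<or> r4 \<noteq> 0"
    "(r1*a + r2*b + r3*c + r4*d) mod q = 0" "ct p r1 a + ct p r2 b + ct p r3 c + ct p r4 d \<noteq> 1"
    using FoundE[OF assms] by blast
  have e: "r1*a + r3*c + r2*b + r4*d = r1*a + r2*b + r3*c + r4*d" by linarith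
  have s: "(r1*a + r3*c + r2*b + r4*d) mod q = 0" by (subst e) (rule h(6))
  have c: "ct p r1 a + ct p r3 c + ct p r2 b + ct p r4 d \<noteq> 1" using h(7) by (simp add: ac_simps)
  show ?thesis by (rule FoundI[of q r1 r3 r2 r4]) (use h s c in blast)+
qed

lemma sw34: assumes "Found p q a b c d" shows "Found p q a b d c"
proof -
  obtain r1 r2 r3 r4 where h: "W q r1" "W q r2" "W q r3" "W q r4" "r1 \<noteq> 0 \<or> r2 \<noteq> 0 \<or> r3 \<noteq> 0 \<or> r4 \<noteq> 0"
    "(r1*a + r2*b + r3*c + r4*d) mod q = 0" "ct p r1 a + ct p r2 b + ct p r3 c + ct p r4 d \<noteq> 1"
    using FoundE[OF assms] by blast
  have e: "r1*a + r2*b + r4*d + r3*c = r1*a + r2*b + r3*c + r4*d" by linarith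
  have s: "(r1*a + r2*b + r4*d + r3*c) mod q = 0" by (subst e) (rule h(6))
  have c: "ct p r1 a + ct p r2 b + ct p r4 d + ct p r3 c \<noteq> 1" using h(7) by (simp add: ac_simps)
  show ?thesis by (rule FoundI[of q r1 r2 r4 r3]) (use h s c in blast)+
qed

lemma Qsq_nd: fixes q r :: int assumes "prime q" "r \<in> Qsq q" shows "\<not> q dvd r" "r \<noteq> 0"
  using assms Qsq_char[OF assms(1)] by auto

lemma one_Qsq: fixes q :: int assumes "prime q" shows "1 \<in> Qsq q"
  using Qsq_char[OF assms] L_one[OF assms] prime_gt_1_int[OF assms] assms not_prime_unit by auto

lemma W1: "prime q \<Longrightarrow> W q 1" by (simp add: W_def one_Qsq)
lemma W0: "W q 0" by (simp add: W_def)

lemma nonsingle: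
  fixes q r z :: int assumes "prime q" "r \<in> Qsq q" "\<not> q dvd z"
  shows "(r*z) mod q \<noteq> 0"
proof
  assume "(r*z) mod q = 0"
  then have "q dvd r*z" by (simp add: mod_eq_0_iff_dvd)
  then show False using assms Qsq_nd[OF assms(1,2)] prime_dvd_mult_iff by blast
qed

lemma tri:
  fixes q x y z :: int
  assumes q: "prime q" and P3: "\<forall>xs. length xs = 3 \<and> set xs \<subseteq> Zmod q \<longrightarrow> has_wzs_subseq q (Qsq q) xs"
  shows "\<exists>r1 r2 r3. W q r1 \<and> W q r2 \<and> W q r3 \<and> (r1 \<noteq> 0 \<or> r2 \<noteq> 0 \<or> r3 \<noteq> 0) \<and>
           (r1*x + r2*y + r3*z) mod q = 0"
proof -
  let ?xs = "[x mod q, y mod q, z mod q]"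
  have "set ?xs \<subseteq> Zmod q" using q prime_gt_0_int[OF q] by (auto simp: Zmod_def)
  then have hw: "has_wzs_subseq q (Qsq q) ?xs" using P3 by simp
  obtain I w where I: "I \<subseteq> {..<3}" "I \<noteq> {}" "\<forall>i\<in>I. w i \<in> Qsq q"
    "(\<Sum>i\<in>I. w i * ?xs ! i) mod q = 0"
    by (rule exE[OF hw[unfolded has_wzs_subseq_def]], elim exE conjE, rule that, simp_all add: numeral_3_eq_3)
  define r1 where "r1 = (if 0 \<in> I then w 0 else 0)"
  define r2 where "r2 = (if 1 \<in> I then w 1 else 0)"
  define r3 where "r3 = (if 2 \<in> I then w 2 else 0)"
  have W: "W q r1" "W q r2" "W q r3" using I(3) by (auto simp: W_def r1_def r2_def r3_def)
  have "I \<subseteq> {0,1,2}" using I(1) by (auto simp: eval_nat_numeral less_Suc_eq)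
  then have "0 \<in> I \<or> 1 \<in> I \<or> 2 \<in> I" using I(2) by blast
  then have nz: "r1 \<noteq> 0 \<or> r2 \<noteq> 0 \<or> r3 \<noteq> 0" using I(3) Qsq_nd[OF q]
    by (auto simp: r1_def r2_def r3_def)
  have e: "(\<Sum>i\<in>I. w i * ?xs ! i) = r1*(x mod q) + r2*(y mod q) + r3*(z mod q)"
    unfolding sum3[OF I(1)] by (simp add: r1_def r2_def r3_def)
  have "[r1*(x mod q) + r2*(y mod q) + r3*(z mod q) = r1*x + r2*y + r3*z] (mod q)"
    by (intro cong_add cong_mult cong_refl) (simp_all add: cong_def)
  then have S: "(r1*x + r2*y + r3*z) mod q = 0" using I(4) e by (simp add: cong_def)
  show ?thesis by (rule exI[of _ r1], rule exI[of _ r2], rule exI[of _ r3], intro conjI, fact W(1), fact W(2), fact W(3), fact nz, fact S)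
qed

lemma Lpm: fixes q x :: int assumes "\<not> q dvd x" shows "Legendre x q = 1 \<or> Legendre x q = -1"
  using L_vals[OF assms] .

lemma pair_dest:
  fixes q r s x y :: int
  assumes q: "prime q" "q > 2" and rs: "r \<in> Qsq q" "s \<in> Qsq q"
    and xy: "\<not> q dvd x" "\<not> q dvd y" and S: "(r*x + s*y) mod q = 0"
  shows "Legendre (-1) q * Legendre x q * Legendre y q = 1"
proof -
  have "(r*x) mod q = (-(s*y)) mod q" using S by (simp add: mod_eq_dvd_iff mod_eq_0_iff_dvd)
  then have "Legendre ((r*x) mod q) q = Legendre ((-(s*y)) mod q) q" by simp
  then have "Legendre (r*x) q = Legendre (-(s*y)) q" by (simp only: L_mod)
  moreover have "Legendre (r*x) q = Legendre x q"
    using L_mult[OF q, of r x] rs(1) Qsq_char[OF q(1)] by simp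
  moreover have "Legendre (-(s*y)) q = Legendre (-1) q * Legendre y q"
  proof -
    have "-(s*y) = (-1) * s * y" by simp
    then have "Legendre (-(s*y)) q = Legendre (-1) q * Legendre s q * Legendre y q"
      using L_mult[OF q] by (metis)
    then show ?thesis using rs(2) Qsq_char[OF q(1)] by simp
  qed
  ultimately have lx: "Legendre x q = Legendre (-1) q * Legendre y q" by simp
  have "\<not> q dvd -1" using q(1) not_prime_unit by (metis dvd_minus_iff)
  then have "Legendre (-1) q = 1 \<or> Legendre (-1) q = -1" by (rule Lpm)
  moreover have "Legendre y q = 1 \<or> Legendre y q = -1" using Lpm[OF xy(2)] .
  ultimately show ?thesis using lx by auto
qed

lemma pair_intro:
  fixes q x y :: int
  assumes q: "prime q" "q > 2" and xy: "\<not> q dvd x" "\<not> q dvd y"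
    and R: "Legendre (-1) q * Legendre x q * Legendre y q = 1"
  shows "\<exists>r s. r \<in> Qsq q \<and> s \<in> Qsq q \<and> (r*x + s*y) mod q = 0"
proof -
  obtain y' where y': "[y*y' = 1] (mod q)"
    using cong_solve_coprime_int prime_ndvd_coprime[OF q(1) xy(2)] by blast
  define s where "s = (-x*y') mod q"
  have "(y*y') mod q = 1 mod q" using y' by (simp add: cong_def)
  then have "Legendre ((y*y') mod q) q = Legendre (1 mod q) q" by simp
  then have "Legendre (y*y') q = 1" by (simp only: L_mod L_one[OF q(1)])
  then have yy: "Legendre y q * Legendre y' q = 1" using L_mult[OF q] by simp
  have ly: "Legendre y' q = Legendre y q"
    using yy Lpm[OF xy(2)] by (auto simp: zmult_eq_1_iff)
  have "Legendre s q = Legendre (-x*y') q" by (simp add: s_def L_mod)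
  also have "-x*y' = (-1)*x*y'" by simp
  also have "Legendre ((-1)*x*y') q = Legendre (-1) q * Legendre x q * Legendre y' q"
    using L_mult[OF q] by metis
  also have "\<dots> = 1" using R ly by simp
  finally have Ls: "Legendre s q = 1" .
  have "\<not> q dvd s"
  proof
    assume "q dvd s" then have "Legendre s q = 0" by (simp add: Legendre_def cong_0_iff)
    then show False using Ls by simp
  qed
  then have sQ: "s \<in> Qsq q" using Qsq_char[OF q(1)] Ls q prime_gt_0_int[OF q(1)] by (simp add: s_def)
  have "[1*x + s*y = x + (-x*y')*y] (mod q)"
    by (intro cong_add cong_mult cong_refl) (simp_all add: s_def cong_def)
  moreover have "x + (-x*y')*y = x - x*(y*y')" by (simp add: algebra_simps)
  moreover have "[x - x*(y*y') = x - x*1] (mod q)" using y' by (intro cong_diff cong_mult cong_refl)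
  ultimately have "[1*x + s*y = 0] (mod q)" by (metis (no_types) cong_trans diff_self mult_1_right)
  then have S: "(1*x + s*y) mod q = 0" by (simp add: cong_def)
  have o: "1 \<in> Qsq q" using one_Qsq[OF q(1)] .
  show ?thesis by (rule exI[of _ 1], rule exI[of _ s], intro conjI, fact o, fact sQ, fact S)
qed

lemma add_pairs: fixes q A B X :: int
  shows "A mod q = 0 \<Longrightarrow> B mod q = 0 \<Longrightarrow> X = A + B \<Longrightarrow> X mod q = 0"
  by (simp add: mod_eq_0_iff_dvd)

lemma signs:
  fixes e l1 l2 lx ly :: int
  assumes "e = 1 \<or> e = -1" "l1 = 1 \<or> l1 = -1" "l2 = 1 \<or> l2 = -1" "lx = 1 \<or> lx = -1" "ly = 1 \<or> ly = -1"
    "e*l1*lx = 1" "e*l2*lx = 1" "e*l1*l2 \<noteq> 1" "e*lx*ly \<noteq> 1"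
  shows "e*l2*ly = 1"
  using assms by (elim disjE) simp_all

lemma triE:
  fixes q x y z :: int
  assumes q: "prime q" and P3: "\<forall>xs. length xs = 3 \<and> set xs \<subseteq> Zmod q \<longrightarrow> has_wzs_subseq q (Qsq q) xs"
  obtains r1 r2 r3 where "W q r1" "W q r2" "W q r3" "r1 \<noteq> 0 \<or> r2 \<noteq> 0 \<or> r3 \<noteq> 0"
           "(r1*x + r2*y + r3*z) mod q = 0"
  by (rule exE[OF tri[OF q P3, of x y z]], elim exE conjE, rule that, assumption+)

lemma pairE:
  fixes q x y :: int
  assumes q: "prime q" "q > 2" and xy: "\<not> q dvd x" "\<not> q dvd y"
    and R: "Legendre (-1) q * Legendre x q * Legendre y q = 1"
  obtains r s where "r \<in> Qsq q" "s \<in> Qsq q" "(r*x + s*y) mod q = 0"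
  by (rule exE[OF pair_intro[OF q xy R]], elim exE conjE, rule that, assumption+)

context
  fixes p q :: int
  assumes pr: "prime p" "prime q" "p \<noteq> q" "p > 2" "q > 2"
    and P3: "\<forall>xs. length xs = 3 \<and> set xs \<subseteq> Zmod q \<longrightarrow> has_wzs_subseq q (Qsq q) xs"
begin

lemma caseQ: assumes d: "q dvd d" shows "Found p q a b c d"
proof (cases "p dvd d")
  case True
  have S: "(0*a + 0*b + 0*c + 1*d) mod q = 0" using d by simp
  have C: "ct p 0 a + ct p 0 b + ct p 0 c + ct p 1 d \<noteq> 1" using True by (simp add: ct_def)
  have nz: "(0::int) \<noteq> 0 \<or> (0::int) \<noteq> 0 \<or> (0::int) \<noteq> 0 \<or> (1::int) \<noteq> 0" by simp
  show ?thesis by (rule FoundI[OF W0 W0 W0 W1[OF pr(2)] nz S C])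
next
  case False
  obtain r1 r2 r3 where r: "W q r1" "W q r2" "W q r3" "r1 \<noteq> 0 \<or> r2 \<noteq> 0 \<or> r3 \<noteq> 0"
    "(r1*a + r2*b + r3*c) mod q = 0" by (rule triE[OF pr(2) P3, of a b c])
  show ?thesis
  proof (cases "ct p r1 a + ct p r2 b + ct p r3 c = 1")
    case True
    have S: "(r1*a + r2*b + r3*c + 1*d) mod q = 0"
      by (rule add_pairs[OF r(5), of "1*d"]) (use d in simp_all)
    have C: "ct p r1 a + ct p r2 b + ct p r3 c + ct p 1 d \<noteq> 1" using True False by (simp add: ct_def)
    show ?thesis by (rule FoundI[OF r(1-3) W1[OF pr(2)] _ S C]) simp
  next
    case False
    have S: "(r1*a + r2*b + r3*c + 0*d) mod q = 0" using r(5) by simp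
    have C: "ct p r1 a + ct p r2 b + ct p r3 c + ct p 0 d \<noteq> 1" using False by (simp add: ct_def)
    show ?thesis by (rule FoundI[OF r(1-3) W0 _ S C]) (use r(4) in blast)
  qed
qed

lemma caseT:
  assumes nq: "\<not> q dvd a" "\<not> q dvd b" "\<not> q dvd c"
    and st: "(p dvd a \<and> p dvd b \<and> p dvd c) \<or> (\<not> p dvd a \<and> \<not> p dvd b \<and> \<not> p dvd c)"
  shows "Found p q a b c d"
proof -
  obtain r1 r2 r3 where r: "W q r1" "W q r2" "W q r3" "r1 \<noteq> 0 \<or> r2 \<noteq> 0 \<or> r3 \<noteq> 0"
    "(r1*a + r2*b + r3*c) mod q = 0" by (rule triE[OF pr(2) P3, of a b c])
  have n1: "(r1*a) mod q \<noteq> 0" if "r1 \<noteq> 0"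
  proof -
    have "r1 \<in> Qsq q" using r(1) that by (simp add: W_def)
    then show ?thesis by (rule nonsingle[OF pr(2) _ nq(1)])
  qed
  have n2: "(r2*b) mod q \<noteq> 0" if "r2 \<noteq> 0"
  proof -
    have "r2 \<in> Qsq q" using r(2) that by (simp add: W_def)
    then show ?thesis by (rule nonsingle[OF pr(2) _ nq(2)])
  qed
  have n3: "(r3*c) mod q \<noteq> 0" if "r3 \<noteq> 0"
  proof -
    have "r3 \<in> Qsq q" using r(3) that by (simp add: W_def)
    then show ?thesis by (rule nonsingle[OF pr(2) _ nq(3)])
  qed
  have C: "ct p r1 a + ct p r2 b + ct p r3 c + ct p 0 d \<noteq> 1"
  proof (cases "p dvd a \<and> p dvd b \<and> p dvd c")
    case True then show ?thesis by (simp add: ct_def)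
  next
    case False
    then have u: "\<not> p dvd a" "\<not> p dvd b" "\<not> p dvd c" using st by auto
    show ?thesis
      using r(5) n1 n2 n3 u by (cases "r1 = 0"; cases "r2 = 0"; cases "r3 = 0") (simp_all add: ct_def)
  qed
  have S: "(r1*a + r2*b + r3*c + 0*d) mod q = 0" using r(5) by simp
  show ?thesis by (rule FoundI[OF r(1-3) W0 _ S C]) (use r(4) in blast)
qed

abbreviation "Lg x \<equiv> Legendre x q"

lemma hard_same:
  assumes P: "p dvd z1" "p dvd z2" "\<not> p dvd x" "\<not> p dvd y"
    and Q: "\<not> q dvd z1" "\<not> q dvd z2" "\<not> q dvd x" "\<not> q dvd y"
    and a: "a1 \<in> Qsq q" "ax \<in> Qsq q" "(a1*z1 + ax*x) mod q = 0"
    and R1: "Lg (-1) * Lg z1 * Lg x = 1" and R2: "Lg (-1) * Lg z2 * Lg x = 1"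
  shows "Found p q z1 z2 x y"
proof -
  have q2: "prime q" "q > 2" using pr by auto
  have Wa: "W q a1" "W q ax" using a by (auto simp: W_def)
  show ?thesis
  proof (cases "Lg (-1) * Lg z1 * Lg z2 = 1")
    case True
    obtain r s where rs: "r \<in> Qsq q" "s \<in> Qsq q" "(r*z1 + s*z2) mod q = 0"
      by (rule pairE[OF q2 Q(1,2) True])
    have S: "(r*z1 + s*z2 + 0*x + 0*y) mod q = 0" using rs(3) by simp
    have C: "ct p r z1 + ct p s z2 + ct p 0 x + ct p 0 y \<noteq> 1" using P by (simp add: ct_def)
    show ?thesis by (rule FoundI[OF _ _ W0 W0 _ S C]) (use rs Qsq_nd[OF q2(1)] in \<open>auto simp: W_def\<close>)
  next
    case F1: False
    show ?thesis
    proof (cases "Lg (-1) * Lg x * Lg y = 1")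
      case True
      obtain r s where rs: "r \<in> Qsq q" "s \<in> Qsq q" "(r*x + s*y) mod q = 0"
        by (rule pairE[OF q2 Q(3,4) True])
      have S: "(0*z1 + 0*z2 + r*x + s*y) mod q = 0" using rs(3) by simp
      have C: "ct p 0 z1 + ct p 0 z2 + ct p r x + ct p s y \<noteq> 1"
        using P rs Qsq_nd[OF q2(1)] by (simp add: ct_def)
      show ?thesis by (rule FoundI[OF W0 W0 _ _ _ S C]) (use rs Qsq_nd[OF q2(1)] in \<open>auto simp: W_def\<close>)
    next
      case F2: False
      have m1: "\<not> q dvd -1" using q2(1) not_prime_unit by (metis dvd_minus_iff)
      have R24: "Lg (-1) * Lg z2 * Lg y = 1"
        by (rule signs[OF Lpm[OF m1] Lpm[OF Q(1)] Lpm[OF Q(2)] Lpm[OF Q(3)] Lpm[OF Q(4)] R1 R2 F1 F2])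
      obtain r s where rs: "r \<in> Qsq q" "s \<in> Qsq q" "(r*z2 + s*y) mod q = 0"
        by (rule pairE[OF q2 Q(2,4) R24])
      have S: "(a1*z1 + r*z2 + ax*x + s*y) mod q = 0"
        by (rule add_pairs[OF a(3) rs(3)]) simp
      have C: "ct p a1 z1 + ct p r z2 + ct p ax x + ct p s y \<noteq> 1"
        using P rs a Qsq_nd[OF q2(1)] by (simp add: ct_def)
      show ?thesis by (rule FoundI[OF Wa(1) _ Wa(2) _ _ S C]) (use rs a Qsq_nd[OF q2(1)] in \<open>auto simp: W_def\<close>)
    qed
  qed
qed

end

lemma card_Suc_filter:
  "card {t. t < Suc n \<and> P t} = card {t. t < n \<and> P t} + (if P n then 1 else 0)"
proof (cases "P n")
  case True
  have "{t. t < Suc n \<and> P t} = insert n {t. t < n \<and> P t}" using True by (auto simp: less_Suc_eq)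
  then show ?thesis using True by simp
next
  case False
  have "{t. t < Suc n \<and> P t} = {t. t < n \<and> P t}" using False by (auto simp: less_Suc_eq)
  then show ?thesis using False by simp
qed

lemma card4:
  "card {t. t < (4::nat) \<and> P t} = (if P 0 then 1 else 0) + (if P 1 then 1 else 0) + (if P 2 then 1 else 0) + (if P 3 then 1 else 0)"
proof -
  have f: "(4::nat) = Suc (Suc (Suc (Suc 0)))" by simp
  show ?thesis unfolding f card_Suc_filter by (simp add: numeral_2_eq_2 numeral_3_eq_3)
qed

lemma Found_wzs:
  fixes p q :: int
  assumes pr: "prime p" "prime q" "p \<noteq> q" "p > 2" and F: "Found p q z1 z2 z3 z4"
  shows "has_wzs_subseq (p*q) (Lset (p*q) p) [z1,z2,z3,z4]"
proof -
  obtain r1 r2 r3 r4 where h: "W q r1" "W q r2" "W q r3" "W q r4" "r1 \<noteq> 0 \<or> r2 \<noteq> 0 \<or> r3 \<noteq> 0 \<or> r4 \<noteq> 0"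
    "(r1*z1 + r2*z2 + r3*z3 + r4*z4) mod q = 0" "ct p r1 z1 + ct p r2 z2 + ct p r3 z3 + ct p r4 z4 \<noteq> 1"
    by (rule FoundE[OF F])
  define \<alpha> where "\<alpha> t = [r1,r2,r3,r4] ! t" for t
  let ?zs = "[z1,z2,z3,z4]"
  have g1: "\<forall>t<length ?zs. \<alpha> t = 0 \<or> \<alpha> t \<in> Qsq q"
    using h(1-4) by (auto simp: less_Suc_eq W_def \<alpha>_def)
  have g2: "\<exists>t<length ?zs. \<alpha> t \<noteq> 0"
  proof -
    have "\<alpha> 0 \<noteq> 0 \<or> \<alpha> 1 \<noteq> 0 \<or> \<alpha> 2 \<noteq> 0 \<or> \<alpha> 3 \<noteq> 0" using h(5) by (simp add: \<alpha>_def)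
    moreover have "(0::nat) < length ?zs" "(1::nat) < length ?zs" "(2::nat) < length ?zs" "(3::nat) < length ?zs"
      by simp_all
    ultimately show ?thesis by blast
  qed
  have g3: "(\<Sum>t<length ?zs. \<alpha> t * ?zs!t) mod q = 0"
  proof -
    have "(\<Sum>t<length ?zs. \<alpha> t * ?zs!t) = r1*z1 + r2*z2 + r3*z3 + r4*z4"
      by (simp add: \<alpha>_def)
    then show ?thesis using h(6) by simp
  qed
  have g4: "card {t. t < length ?zs \<and> \<alpha> t \<noteq> 0 \<and> \<not> p dvd ?zs!t} \<noteq> 1"
  proof -
    have "card {t. t < length ?zs \<and> \<alpha> t \<noteq> 0 \<and> \<not> p dvd ?zs!t} = ct p r1 z1 + ct p r2 z2 + ct p r3 z3 + ct p r4 z4"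
    proof -
      have L: "length ?zs = 4" by simp
      show ?thesis unfolding L card4 by (simp add: ct_def \<alpha>_def)
    qed
    then show ?thesis using h(7) by simp
  qed
  show ?thesis by (rule lift[OF pr g1 g2 g3 g4])
qed

context
  fixes p q :: int
  assumes pr: "prime p" "prime q" "p \<noteq> q" "p > 2" "q > 2"
    and P3: "\<forall>xs. length xs = 3 \<and> set xs \<subseteq> Zmod q \<longrightarrow> has_wzs_subseq q (Qsq q) xs"
begin

lemma hard:
  assumes P: "p dvd z1" "p dvd z2" "\<not> p dvd z3" "\<not> p dvd z4"
    and Q: "\<not> q dvd z1" "\<not> q dvd z2" "\<not> q dvd z3" "\<not> q dvd z4"
  shows "Found p q z1 z2 z3 z4"
proof -
  have q2: "prime q" "q > 2" using pr by auto
  obtain a1 a3 a4 where A: "W q a1" "W q a3" "W q a4" "a1 \<noteq> 0 \<or> a3 \<noteq> 0 \<or> a4 \<noteq> 0"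
    "(a1*z1 + a3*z3 + a4*z4) mod q = 0" by (rule triE[OF pr(2) P3])
  obtain b2 b3 b4 where B: "W q b2" "W q b3" "W q b4" "b2 \<noteq> 0 \<or> b3 \<noteq> 0 \<or> b4 \<noteq> 0"
    "(b2*z2 + b3*z3 + b4*z4) mod q = 0" by (rule triE[OF pr(2) P3])
  have ctP: "ct p r z1 = 0" "ct p r z2 = 0" for r using P by (auto simp: ct_def)
  have ctU: "ct p r z3 = (if r \<noteq> 0 then 1 else 0)" "ct p r z4 = (if r \<noteq> 0 then 1 else 0)" for r
    using P by (auto simp: ct_def)
  have WQ: "r \<in> Qsq q" if "W q r" "r \<noteq> 0" for r using that by (simp add: W_def)
  have ns: "(r*z) mod q \<noteq> 0" if "W q r" "r \<noteq> 0" "\<not> q dvd z" for r z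
    by (rule nonsingle[OF pr(2) WQ[OF that(1,2)] that(3)])
  show ?thesis
  proof (cases "ct p a3 z3 + ct p a4 z4 = 1")
    case False
    have S: "(a1*z1 + 0*z2 + a3*z3 + a4*z4) mod q = 0" using A(5) by simp
    have C: "ct p a1 z1 + ct p 0 z2 + ct p a3 z3 + ct p a4 z4 \<noteq> 1" using False ctP by simp
    have nz: "a1 \<noteq> 0 \<or> (0::int) \<noteq> 0 \<or> a3 \<noteq> 0 \<or> a4 \<noteq> 0" using A(4) by blast
    show ?thesis by (rule FoundI[OF A(1) W0 A(2) A(3) nz S C])
  next
    case TA: True
    have Aor: "(a1 \<in> Qsq q \<and> a3 \<in> Qsq q \<and> (a1*z1 + a3*z3) mod q = 0) \<or>
               (a1 \<in> Qsq q \<and> a4 \<in> Qsq q \<and> (a1*z1 + a4*z4) mod q = 0)"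
    proof (cases "a3 = 0")
      case True
      then have a4: "a4 \<noteq> 0" using TA ctU by (simp split: if_splits)
      have a1: "a1 \<noteq> 0"
      proof
        assume "a1 = 0"
        then have "(a4*z4) mod q = 0" using A(5) True by simp
        then show False using ns[OF A(3) a4 Q(4)] by simp
      qed
      have "(a1*z1 + a4*z4) mod q = 0" using A(5) True by simp
      then show ?thesis using WQ[OF A(1) a1] WQ[OF A(3) a4] by blast
    next
      case False
      then have a4: "a4 = 0" using TA ctU by (simp split: if_splits)
      have a1: "a1 \<noteq> 0"
      proof
        assume "a1 = 0"
        then have "(a3*z3) mod q = 0" using A(5) a4 by simp
        then show False using ns[OF A(2) False Q(3)] by simp
      qed
      have "(a1*z1 + a3*z3) mod q = 0" using A(5) a4 by simp
      then show ?thesis using WQ[OF A(1) a1] WQ[OF A(2) False] by blast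
    qed
    show ?thesis
    proof (cases "ct p b3 z3 + ct p b4 z4 = 1")
      case False
      have S: "(0*z1 + b2*z2 + b3*z3 + b4*z4) mod q = 0" using B(5) by simp
      have C: "ct p 0 z1 + ct p b2 z2 + ct p b3 z3 + ct p b4 z4 \<noteq> 1" using False ctP by simp
      have nz: "(0::int) \<noteq> 0 \<or> b2 \<noteq> 0 \<or> b3 \<noteq> 0 \<or> b4 \<noteq> 0" using B(4) by blast
      show ?thesis by (rule FoundI[OF W0 B(1) B(2) B(3) nz S C])
    next
      case TB: True
      have Bor: "(b2 \<in> Qsq q \<and> b3 \<in> Qsq q \<and> (b2*z2 + b3*z3) mod q = 0) \<or>
                 (b2 \<in> Qsq q \<and> b4 \<in> Qsq q \<and> (b2*z2 + b4*z4) mod q = 0)"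
      proof (cases "b3 = 0")
        case True
        then have b4: "b4 \<noteq> 0" using TB ctU by (simp split: if_splits)
        have b2: "b2 \<noteq> 0"
        proof
          assume "b2 = 0"
          then have "(b4*z4) mod q = 0" using B(5) True by simp
          then show False using ns[OF B(3) b4 Q(4)] by simp
        qed
        have "(b2*z2 + b4*z4) mod q = 0" using B(5) True by simp
        then show ?thesis using WQ[OF B(1) b2] WQ[OF B(3) b4] by blast
      next
        case False
        then have b4: "b4 = 0" using TB ctU by (simp split: if_splits)
        have b2: "b2 \<noteq> 0"
        proof
          assume "b2 = 0"
          then have "(b3*z3) mod q = 0" using B(5) b4 by simp
          then show False using ns[OF B(2) False Q(3)] by simp
        qed
        have "(b2*z2 + b3*z3) mod q = 0" using B(5) b4 by simp
        then show ?thesis using WQ[OF B(1) b2] WQ[OF B(2) False] by blast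
      qed
      have Qn: "r \<noteq> 0" "W q r" if "r \<in> Qsq q" for r using that Qsq_nd[OF pr(2)] by (auto simp: W_def)
      show ?thesis
      proof (cases "a1 \<in> Qsq q \<and> a3 \<in> Qsq q \<and> (a1*z1 + a3*z3) mod q = 0")
        case A3: True
        note A3c = conjunct1[OF A3] conjunct1[OF conjunct2[OF A3]] conjunct2[OF conjunct2[OF A3]]
        show ?thesis
        proof (cases "b2 \<in> Qsq q \<and> b3 \<in> Qsq q \<and> (b2*z2 + b3*z3) mod q = 0")
          case B3: True
          note B3c = conjunct1[OF B3] conjunct1[OF conjunct2[OF B3]] conjunct2[OF conjunct2[OF B3]]
          have R1: "Legendre (-1) q * Legendre z1 q * Legendre z3 q = 1"
            by (rule pair_dest[OF q2 A3c(1,2) Q(1) Q(3) A3c(3)])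
          have R2: "Legendre (-1) q * Legendre z2 q * Legendre z3 q = 1"
            by (rule pair_dest[OF q2 B3c(1,2) Q(2) Q(3) B3c(3)])
          show ?thesis
            by (rule hard_same[OF pr P3 P Q A3c R1 R2])
        next
          case B4n: False
          have B4': "b2 \<in> Qsq q \<and> b4 \<in> Qsq q \<and> (b2*z2 + b4*z4) mod q = 0"
            by (rule disjE[OF Bor]) (use B4n in simp_all)
          note B4 = conjunct1[OF B4'] conjunct1[OF conjunct2[OF B4']] conjunct2[OF conjunct2[OF B4']]
          have S: "(a1*z1 + b2*z2 + a3*z3 + b4*z4) mod q = 0"
            by (rule add_pairs[of "a1*z1 + a3*z3" q "b2*z2 + b4*z4"]) (use A3c B4 in simp_all)
          have C: "ct p a1 z1 + ct p b2 z2 + ct p a3 z3 + ct p b4 z4 \<noteq> 1"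
            using ctP ctU Qn(1)[OF A3c(1)] Qn(1)[OF A3c(2)] Qn(1)[OF B4(1)] Qn(1)[OF B4(2)] by simp
          have nz: "a1 \<noteq> 0 \<or> b2 \<noteq> 0 \<or> a3 \<noteq> 0 \<or> b4 \<noteq> 0" using Qn(1)[OF A3c(1)] by simp
          show ?thesis by (rule FoundI[OF Qn(2)[OF A3c(1)] Qn(2)[OF B4(1)] Qn(2)[OF A3c(2)] Qn(2)[OF B4(2)] nz S C])
        qed
      next
        case A4n: False
        have A4': "a1 \<in> Qsq q \<and> a4 \<in> Qsq q \<and> (a1*z1 + a4*z4) mod q = 0"
          by (rule disjE[OF Aor]) (use A4n in simp_all)
        note A4 = conjunct1[OF A4'] conjunct1[OF conjunct2[OF A4']] conjunct2[OF conjunct2[OF A4']]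
        show ?thesis
        proof (cases "b2 \<in> Qsq q \<and> b3 \<in> Qsq q \<and> (b2*z2 + b3*z3) mod q = 0")
          case B3: True
          note B3c = conjunct1[OF B3] conjunct1[OF conjunct2[OF B3]] conjunct2[OF conjunct2[OF B3]]
          have S: "(a1*z1 + b2*z2 + b3*z3 + a4*z4) mod q = 0"
            by (rule add_pairs[of "a1*z1 + a4*z4" q "b2*z2 + b3*z3"]) (use A4 B3c in simp_all)
          have C: "ct p a1 z1 + ct p b2 z2 + ct p b3 z3 + ct p a4 z4 \<noteq> 1"
            using ctP ctU Qn(1)[OF A4(1)] Qn(1)[OF A4(2)] Qn(1)[OF B3c(1)] Qn(1)[OF B3c(2)] by simp
          have nz: "a1 \<noteq> 0 \<or> b2 \<noteq> 0 \<or> b3 \<noteq> 0 \<or> a4 \<noteq> 0" using Qn(1)[OF A4(1)] by simp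
          show ?thesis by (rule FoundI[OF Qn(2)[OF A4(1)] Qn(2)[OF B3c(1)] Qn(2)[OF B3c(2)] Qn(2)[OF A4(2)] nz S C])
        next
          case B4n: False
          have B4': "b2 \<in> Qsq q \<and> b4 \<in> Qsq q \<and> (b2*z2 + b4*z4) mod q = 0"
            by (rule disjE[OF Bor]) (use B4n in simp_all)
          note B4 = conjunct1[OF B4'] conjunct1[OF conjunct2[OF B4']] conjunct2[OF conjunct2[OF B4']]
          have R1: "Legendre (-1) q * Legendre z1 q * Legendre z4 q = 1"
            using pair_dest[OF q2 A4(1,2) Q(1) Q(4) A4(3)] .
          have R2: "Legendre (-1) q * Legendre z2 q * Legendre z4 q = 1"
            using pair_dest[OF q2 B4(1,2) Q(2) Q(4) B4(3)] .
          have "Found p q z1 z2 z4 z3"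
            by (rule hard_same[OF pr P3 P(1,2,4,3) Q(1,2,4,3) A4 R1 R2])
          then show ?thesis by (rule sw34)
        qed
      qed
    qed
  qed
qed

end

context
  fixes p q :: int
  assumes pr: "prime p" "prime q" "p \<noteq> q" "p > 2" "q > 2"
    and P3: "\<forall>xs. length xs = 3 \<and> set xs \<subseteq> Zmod q \<longrightarrow> has_wzs_subseq q (Qsq q) xs"
begin

lemma Found_all: "Found p q z1 z2 z3 z4"
proof (cases "q dvd z1 \<or> q dvd z2 \<or> q dvd z3 \<or> q dvd z4")
  case True
  note cQ = caseQ[OF pr P3]
  have h4: ?thesis if "q dvd z4" by (rule cQ[OF that])
  have h3: ?thesis if "q dvd z3" by (rule sw34, rule cQ[OF that])
  have h2: ?thesis if "q dvd z2" by (rule sw23, rule sw34, rule cQ[OF that])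
  have h1: ?thesis if "q dvd z1" by (rule sw12, rule sw23, rule sw34, rule cQ[OF that])
  show ?thesis using True h1 h2 h3 h4 by blast
next
  case False
  then have nq: "\<not> q dvd z1" "\<not> q dvd z2" "\<not> q dvd z3" "\<not> q dvd z4" by auto
  note cT = caseT[OF pr P3]
  note hd = hard[OF pr P3]
  have t1: ?thesis if "(p dvd z1 \<and> p dvd z2 \<and> p dvd z3) \<or> (\<not> p dvd z1 \<and> \<not> p dvd z2 \<and> \<not> p dvd z3)"
    by (rule cT[OF nq(1,2,3) that])
  have t2: ?thesis if "(p dvd z1 \<and> p dvd z2 \<and> p dvd z4) \<or> (\<not> p dvd z1 \<and> \<not> p dvd z2 \<and> \<not> p dvd z4)"
    by (rule sw34, rule cT[OF nq(1,2,4) that])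
  have t3: ?thesis if "(p dvd z1 \<and> p dvd z3 \<and> p dvd z4) \<or> (\<not> p dvd z1 \<and> \<not> p dvd z3 \<and> \<not> p dvd z4)"
    by (rule sw23, rule sw34, rule cT[OF nq(1,3,4) that])
  have t4: ?thesis if "(p dvd z2 \<and> p dvd z3 \<and> p dvd z4) \<or> (\<not> p dvd z2 \<and> \<not> p dvd z3 \<and> \<not> p dvd z4)"
    by (rule sw12, rule sw23, rule sw34, rule cT[OF nq(2,3,4) that])
  have k12: ?thesis if "p dvd z1" "p dvd z2" "\<not> p dvd z3" "\<not> p dvd z4"
    by (rule hd[OF that nq])
  have k13: ?thesis if "p dvd z1" "p dvd z3" "\<not> p dvd z2" "\<not> p dvd z4"
    by (rule sw23, rule hd[OF that nq(1,3,2,4)])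
  have k14: ?thesis if "p dvd z1" "p dvd z4" "\<not> p dvd z2" "\<not> p dvd z3"
    by (rule sw34, rule sw23, rule hd[OF that nq(1,4,2,3)])
  have k23: ?thesis if "p dvd z2" "p dvd z3" "\<not> p dvd z1" "\<not> p dvd z4"
    by (rule sw12, rule sw23, rule hd[OF that nq(2,3,1,4)])
  have k24: ?thesis if "p dvd z2" "p dvd z4" "\<not> p dvd z1" "\<not> p dvd z3"
    by (rule sw12, rule sw34, rule sw23, rule hd[OF that nq(2,4,1,3)])
  have k34: ?thesis if "p dvd z3" "p dvd z4" "\<not> p dvd z1" "\<not> p dvd z2"
    by (rule sw23, rule sw34, rule sw12, rule sw23, rule hd[OF that nq(3,4,1,2)])
  show ?thesis
    using t1 t2 t3 t4 k12 k13 k14 k23 k24 k34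
    by (cases "p dvd z1"; cases "p dvd z2"; cases "p dvd z3"; cases "p dvd z4"; blast)
qed

lemma P4: "\<forall>xs. length xs = 4 \<and> set xs \<subseteq> Zmod (p*q) \<longrightarrow> has_wzs_subseq (p*q) (Lset (p*q) p) xs"
proof (intro allI impI)
  fix xs :: "int list" assume "length xs = 4 \<and> set xs \<subseteq> Zmod (p*q)"
  then have L: "length xs = 4" by simp
  have "xs = [xs!0, xs!1, xs!2, xs!3]"
    by (rule nth_equalityI) (use L in \<open>auto simp: less_Suc_eq eval_nat_numeral\<close>)
  moreover have "has_wzs_subseq (p*q) (Lset (p*q) p) [xs!0, xs!1, xs!2, xs!3]"
    by (rule Found_wzs[OF pr(1-4) Found_all])
  ultimately show "has_wzs_subseq (p*q) (Lset (p*q) p) xs" by simp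
qed

end

lemma wzs_take:
  assumes "has_wzs_subseq m A (take k xs)" shows "has_wzs_subseq m A xs"
proof -
  obtain I a where I: "I \<subseteq> {..<length (take k xs)}" "I \<noteq> {}" "\<forall>i\<in>I. a i \<in> A"
    "(\<Sum>i\<in>I. a i * take k xs ! i) mod m = 0"
    by (rule exE[OF assms[unfolded has_wzs_subseq_def]], elim exE conjE, rule that, assumption+)
  have I1: "I \<subseteq> {..<length xs}" using I(1) by auto
  have "(\<Sum>i\<in>I. a i * take k xs ! i) = (\<Sum>i\<in>I. a i * xs ! i)"
    using I(1) by (intro sum.cong) auto
  then have S: "(\<Sum>i\<in>I. a i * xs ! i) mod m = 0" using I(4) by simp
  show ?thesis unfolding has_wzs_subseq_def
    by (rule exI[of _ I], rule exI[of _ a], intro conjI, fact I1, fact I(2), fact I(3), fact S)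
qed

theorem theorem5p6:
  fixes p' q x1 x2 x3 :: int
  assumes "prime p'" and "prime q" and "p' \<noteq> q" and "p' \<ge> 7" and "q \<ge> 7"
    and "x1 \<in> Zmod (p' * q)" and "x2 \<in> Zmod (p' * q)" and "x3 \<in> Zmod (p' * q)"
    and "\<exists>y1 y2 y3. set [y1, y2, y3] \<subseteq> Zmod (p' * q) \<and>
           equiv_wrt (p' * q) (Lset (p' * q) p') [x1, x2, x3] [y1, y2, y3] \<and>
           ((q dvd y1 \<and> \<not> q dvd y2 \<and> \<not> q dvd y3 \<and> y1 \<noteq> 0 \<and>
               extremal q (Qsq q) [y2 mod q, y3 mod q])
            \<or> (coprime y1 p' \<and> \<not> coprime y2 p' \<and> \<not> coprime y3 p' \<and>
               extremal q (Qsq q) [y2 mod q, y3 mod q]))"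
  shows "extremal (p' * q) (Lset (p' * q) p') [x1, x2, x3]"
proof -
  have pr: "prime p'" "prime q" "p' \<noteq> q" "p' > 2" "q > 2" using assms(1-5) by auto
  obtain y1 y2 y3 where Y: "set [y1, y2, y3] \<subseteq> Zmod (p' * q)"
    "equiv_wrt (p' * q) (Lset (p' * q) p') [x1, x2, x3] [y1, y2, y3]"
    "(q dvd y1 \<and> \<not> q dvd y2 \<and> \<not> q dvd y3 \<and> y1 \<noteq> 0 \<and>
               extremal q (Qsq q) [y2 mod q, y3 mod q])
            \<or> (coprime y1 p' \<and> \<not> coprime y2 p' \<and> \<not> coprime y3 p' \<and>
               extremal q (Qsq q) [y2 mod q, y3 mod q])"
    by (rule exE[OF assms(9)], elim exE conjE, rule that, assumption+)
  have ext: "extremal q (Qsq q) [y2 mod q, y3 mod q]" using Y(3) by blast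
  have cY: "(q dvd y1 \<and> y1 \<noteq> 0) \<or> (coprime y1 p' \<and> \<not> coprime y2 p' \<and> \<not> coprime y3 p')"
    using Y(3) by blast
  have "length [y2 mod q, y3 mod q] = Davenport q (Qsq q) - 1" using ext unfolding extremal_def by blast
  then have Dq: "Davenport q (Qsq q) = 3" by simp
  have nq: "\<not> has_wzs_subseq q (Qsq q) [y2 mod q, y3 mod q]" using ext unfolding extremal_def by simp
  have P3: "\<forall>xs. length xs = 3 \<and> set xs \<subseteq> Zmod q \<longrightarrow> has_wzs_subseq q (Qsq q) xs"
  proof -
    have "\<forall>xs. length xs = Davenport q (Qsq q) \<and> set xs \<subseteq> Zmod q \<longrightarrow> has_wzs_subseq q (Qsq q) xs"
      unfolding Davenport_def by (rule LeastI_ex[OF exists_P[OF pr(2)]])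
    then show ?thesis using Dq by simp
  qed
  have y1r: "0 \<le> y1" "y1 < p'*q" using Y(1) by (auto simp: Zmod_def)
  have ny: "\<not> has_wzs_subseq (p'*q) (Lset (p'*q) p') [y1,y2,y3]"
    by (rule nowzs_y[OF pr(1-3) y1r cY nq])
  have pos: "p'*q > 0" using pr prime_gt_0_int by simp
  have nx: "\<not> has_wzs_subseq (p'*q) (Lset (p'*q) p') [x1,x2,x3]"
  proof
    assume hx: "has_wzs_subseq (p'*q) (Lset (p'*q) p') [x1,x2,x3]"
    have "has_wzs_subseq (p'*q) (Lset (p'*q) p') [y1,y2,y3]"
      by (rule wzs_transfer[OF hx Y(2) pos]) (use A_mult[OF pr(1-3,5)] A_inv[OF pr(1-3,5)] in auto)
    then show False using ny by simp
  qed
  have P4: "\<forall>xs. length xs = 4 \<and> set xs \<subseteq> Zmod (p'*q) \<longrightarrow> has_wzs_subseq (p'*q) (Lset (p'*q) p') xs"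
    by (rule P4[OF pr P3])
  have sx: "set [x1,x2,x3] \<subseteq> Zmod (p'*q)" using assms(6-8) by simp
  have notP: "\<not> (\<forall>xs. length xs = k \<and> set xs \<subseteq> Zmod (p'*q) \<longrightarrow> has_wzs_subseq (p'*q) (Lset (p'*q) p') xs)"
    if "k < 4" for k
  proof
    assume h: "\<forall>xs. length xs = k \<and> set xs \<subseteq> Zmod (p'*q) \<longrightarrow> has_wzs_subseq (p'*q) (Lset (p'*q) p') xs"
    have c1: "length (take k [x1,x2,x3]) = k" using that by simp
    have c2: "set (take k [x1,x2,x3]) \<subseteq> Zmod (p'*q)" using sx set_take_subset by (rule order_trans[rotated])
    have "has_wzs_subseq (p'*q) (Lset (p'*q) p') (take k [x1,x2,x3])"
      by (rule mp[OF spec[OF h] conjI[OF c1 c2]])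
    then have "has_wzs_subseq (p'*q) (Lset (p'*q) p') [x1,x2,x3]" by (rule wzs_take)
    then show False using nx by simp
  qed
  have D: "Davenport (p'*q) (Lset (p'*q) p') = 4"
    unfolding Davenport_def
  proof (rule Least_equality)
    show "\<forall>xs. length xs = 4 \<and> set xs \<subseteq> Zmod (p'*q) \<longrightarrow> has_wzs_subseq (p'*q) (Lset (p'*q) p') xs"
      by (rule P4)
  next
    fix k assume "\<forall>xs. length xs = k \<and> set xs \<subseteq> Zmod (p'*q) \<longrightarrow> has_wzs_subseq (p'*q) (Lset (p'*q) p') xs"
    then show "4 \<le> k" using notP by (meson not_le)
  qed
  show ?thesis unfolding extremal_def using sx D nx by simp
qed


end
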